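(* Let $(W,S)$ be a Coxeter system with $S$ finite, and let $\Bbbk$ be a commutative ring with no $2$-torsion. Let $(\mathfrak{h},\mathfrak{h}^*,\Delta^\vee,\Delta)$ be a realization of $(W,S)$ over $\Bbbk$, and suppose that its Cartan matrix $A=(a_{s,t})_{s,t\in S}$, $a_{s,t}=\langle \alpha_s^\vee,\alpha_t\rangle$, has determinant which is invertible in $\Bbbk$. Then $\Delta$ and $\Delta^\vee$ are each linearly independent. Moreover, as representations of $W$ one has $\mathfrak{h}\cong \Bbbk\cdot\Delta^\vee\oplus T$ for some trivial representation $T$ contained in the common kernel of all $\alpha_s$, $s\in S$; similarly $\mathfrak{h}^*\cong \Bbbk\cdot \Delta\oplus T^*$ for a trivial representation $T^*$ (contained in the common kernel of all $\alpha_s^\vee$).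
   Context: A (simple) realization of a Coxeter system $(W,S)$ over $\Bbbk$ is a free $\Bbbk$-module $\mathfrak{h}$ of finite rank together with subsets $\Delta^\vee=\{\alpha_s^\vee : s\in S\}\subset\mathfrak{h}$ (simple coroots) and $\Delta=\{\alpha_s : s\in S\}\subset \mathfrak{h}^*=\mathrm{Hom}_\Bbbk(\mathfrak{h},\Bbbk)$ (simple roots) such that $\langle\alpha_s^\vee,\alpha_s\rangle=2$ for all $s\in S$, and the assignment $s(v)=v-\langle v,\alpha_s\rangle\alpha_s^\vee$ for $v\in\mathfrak{h}$ defines a representation of $W$ on $\mathfrak{h}$. The contragredient action on $\mathfrak{h}^*$ is $s(f)=f-\langle\alpha_s^\vee,f\rangle\alpha_s$. Here $\Bbbk\cdot\Delta^\vee$ denotes the $\Bbbk$-span of $\Delta^\vee$, and similarly for $\Delta$. *)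

theory Defs
  imports "HOL-Algebra.Group" "HOL-Combinatorics.Permutations"
begin

definition word_prod :: "('g, 'b) monoid_scheme \<Rightarrow> 'g list \<Rightarrow> 'g" where
  "word_prod G w = foldr (\<lambda>x y. x \<otimes>\<^bsub>G\<^esub> y) w \<one>\<^bsub>G\<^esub>"

definition cox_move :: "('g, 'b) monoid_scheme \<Rightarrow> 'g set \<Rightarrow> 'g list \<Rightarrow> 'g list \<Rightarrow> bool" where
  "cox_move G S u v \<longleftrightarrow>
     (\<exists>a b s. s \<in> S \<and> u = a @ [s, s] @ b \<and> v = a @ b) \<or>
     (\<exists>a b s t m. s \<in> S \<and> t \<in> S \<and> 0 < (m::nat) \<and> (s \<otimes>\<^bsub>G\<^esub> t) [^]\<^bsub>G\<^esub> m = \<one>\<^bsub>G\<^esub>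
        \<and> u = a @ concat (replicate m [s, t]) @ b \<and> v = a @ b)"

definition cox_equiv :: "('g, 'b) monoid_scheme \<Rightarrow> 'g set \<Rightarrow> 'g list \<Rightarrow> 'g list \<Rightarrow> bool" where
  "cox_equiv G S = (symclp (cox_move G S))\<^sup>*\<^sup>*"

text \<open>(W,S) is a Coxeter system: S is a generating set of involutions and W has the
  presentation with generators S and relations s^2 = 1, (st)^(m_st) = 1, i.e. every
  word in S evaluating to 1 is reducible to the empty word using these relations.\<close>
definition coxeter_system :: "('g, 'b) monoid_scheme \<Rightarrow> 'g set \<Rightarrow> bool" where
  "coxeter_system G S \<longleftrightarrow> group G \<and> S \<subseteq> carrier G \<and>
     (\<forall>s\<in>S. s \<noteq> \<one>\<^bsub>G\<^esub> \<and> s \<otimes>\<^bsub>G\<^esub> s = \<one>\<^bsub>G\<^esub>) \<and>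
     carrier G = {word_prod G w | w. set w \<subseteq> S} \<and>
     (\<forall>w. set w \<subseteq> S \<longrightarrow> word_prod G w = \<one>\<^bsub>G\<^esub> \<longrightarrow> cox_equiv G S w [])"

text \<open>h is modelled as k^n: functions nat => k vanishing from index n on; h^* is
  identified with k^n via the perfect pairing below.\<close>
definition in_h :: "nat \<Rightarrow> (nat \<Rightarrow> 'k::comm_ring_1) \<Rightarrow> bool" where
  "in_h n v \<longleftrightarrow> (\<forall>i\<ge>n. v i = 0)"

definition pair :: "nat \<Rightarrow> (nat \<Rightarrow> 'k::comm_ring_1) \<Rightarrow> (nat \<Rightarrow> 'k) \<Rightarrow> 'k" where
  "pair n v f = (\<Sum>i<n. v i * f i)"

definition unitv :: "nat \<Rightarrow> nat \<Rightarrow> 'k::comm_ring_1" where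
  "unitv j = (\<lambda>i. if i = j then 1 else 0)"

definition refl_h :: "nat \<Rightarrow> (nat \<Rightarrow> 'k::comm_ring_1) \<Rightarrow> (nat \<Rightarrow> 'k) \<Rightarrow> (nat \<Rightarrow> 'k) \<Rightarrow> (nat \<Rightarrow> 'k)" where
  "refl_h n cor rt v = (\<lambda>i. v i - pair n v rt * cor i)"

definition submodule_h :: "nat \<Rightarrow> (nat \<Rightarrow> 'k::comm_ring_1) set \<Rightarrow> bool" where
  "submodule_h n T \<longleftrightarrow> (\<forall>v\<in>T. in_h n v) \<and> (\<lambda>i. 0) \<in> T \<and>
     (\<forall>v\<in>T. \<forall>w\<in>T. (\<lambda>i. v i + w i) \<in> T) \<and> (\<forall>c. \<forall>v\<in>T. (\<lambda>i. c * v i) \<in> T)"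

definition span_fam :: "'g set \<Rightarrow> ('g \<Rightarrow> nat \<Rightarrow> 'k::comm_ring_1) \<Rightarrow> (nat \<Rightarrow> 'k) set" where
  "span_fam S a = {(\<lambda>i. \<Sum>s\<in>S. c s * a s i) | c. True}"

definition lin_indep_fam :: "'g set \<Rightarrow> ('g \<Rightarrow> nat \<Rightarrow> 'k::comm_ring_1) \<Rightarrow> bool" where
  "lin_indep_fam S a \<longleftrightarrow>
     (\<forall>c. (\<lambda>i. \<Sum>s\<in>S. c s * a s i) = (\<lambda>i. 0) \<longrightarrow> (\<forall>s\<in>S. c s = 0))"

definition direct_sum_h :: "nat \<Rightarrow> (nat \<Rightarrow> 'k::comm_ring_1) set \<Rightarrow> (nat \<Rightarrow> 'k) set \<Rightarrow> bool" where
  "direct_sum_h n A T \<longleftrightarrow> A \<inter> T = {\<lambda>i. 0} \<and>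
     (\<forall>v. in_h n v \<longrightarrow> (\<exists>x\<in>A. \<exists>t\<in>T. v = (\<lambda>i. x i + t i)))"

definition is_rep :: "('g, 'b) monoid_scheme \<Rightarrow> nat \<Rightarrow> ('g \<Rightarrow> (nat \<Rightarrow> 'k::comm_ring_1) \<Rightarrow> (nat \<Rightarrow> 'k)) \<Rightarrow> bool" where
  "is_rep G n \<rho> \<longleftrightarrow>
     (\<forall>g\<in>carrier G. \<forall>v. in_h n v \<longrightarrow> in_h n (\<rho> g v)) \<and>
     (\<forall>g\<in>carrier G. \<forall>c u v. in_h n u \<longrightarrow> in_h n v \<longrightarrow>
         \<rho> g (\<lambda>i. c * u i + v i) = (\<lambda>i. c * \<rho> g u i + \<rho> g v i)) \<and>
     (\<forall>v. in_h n v \<longrightarrow> \<rho> \<one>\<^bsub>G\<^esub> v = v) \<and>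
     (\<forall>g\<in>carrier G. \<forall>h\<in>carrier G. \<forall>v. in_h n v \<longrightarrow> \<rho> (g \<otimes>\<^bsub>G\<^esub> h) v = \<rho> g (\<rho> h v))"

definition realization ::
  "('g, 'b) monoid_scheme \<Rightarrow> 'g set \<Rightarrow> nat \<Rightarrow> ('g \<Rightarrow> nat \<Rightarrow> 'k::comm_ring_1) \<Rightarrow> ('g \<Rightarrow> nat \<Rightarrow> 'k)
     \<Rightarrow> ('g \<Rightarrow> (nat \<Rightarrow> 'k) \<Rightarrow> (nat \<Rightarrow> 'k)) \<Rightarrow> bool" where
  "realization G S n cor rt \<rho> \<longleftrightarrow>
     (\<forall>s\<in>S. in_h n (cor s) \<and> in_h n (rt s) \<and> pair n (cor s) (rt s) = 2) \<and>
     is_rep G n \<rho> \<and>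
     (\<forall>s\<in>S. \<forall>v. in_h n v \<longrightarrow> \<rho> s v = refl_h n (cor s) (rt s) v)"

text \<open>Contragredient action on h^* = k^n: pair v (dual_act w f) = pair (rho (w^-1) v) f.\<close>
definition dual_act ::
  "('g, 'b) monoid_scheme \<Rightarrow> nat \<Rightarrow> ('g \<Rightarrow> (nat \<Rightarrow> 'k::comm_ring_1) \<Rightarrow> (nat \<Rightarrow> 'k)) \<Rightarrow> 'g
     \<Rightarrow> (nat \<Rightarrow> 'k) \<Rightarrow> (nat \<Rightarrow> 'k)" where
  "dual_act G n \<rho> w f = (\<lambda>j. if j < n then pair n (\<rho> (inv\<^bsub>G\<^esub> w) (unitv j)) f else 0)"

definition cartan_det :: "'g set \<Rightarrow> nat \<Rightarrow> ('g \<Rightarrow> nat \<Rightarrow> 'k::comm_ring_1) \<Rightarrow> ('g \<Rightarrow> nat \<Rightarrow> 'k) \<Rightarrow> 'k" where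
  "cartan_det S n cor rt =
     (\<Sum>p\<in>{p. p permutes S}. of_int (sign p) * (\<Prod>s\<in>S. pair n (cor s) (rt (p s))))"

end

theory Submission imports Defs "Jordan_Normal_Form.Determinant" begin

lemma leib_reindex:
  fixes a :: "'g \<Rightarrow> 'g \<Rightarrow> 'k::comm_ring_1" and f :: "nat \<Rightarrow> 'g"
  assumes bij: "bij_betw f {0..<m} S"
  shows "(\<Sum>q | q permutes {0..<m}. of_int (sign q) * (\<Prod>i=0..<m. a (f i) (f (q i))))
       = (\<Sum>p\<in>{p. p permutes S}. of_int (sign p) * (\<Prod>s\<in>S. a s (p s)))"
proof -
  define g where "g = inv_into {0..<m} f"
  have fg: "f (g x) = x" if "x \<in> S" for x using bij that unfolding g_def
    by (meson bij_betw_inv_into_right)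
  have gf: "g (f x) = x" if "x \<in> {0..<m}" for x using bij that unfolding g_def
    by (meson bij_betw_inv_into_left)
  have gS: "g x \<in> {0..<m}" if "x \<in> S" for x using bij that unfolding g_def
    by (meson bij_betw_apply bij_betw_inv_into)
  have fS: "f x \<in> S" if "x \<in> {0..<m}" for x using bij that by (meson bij_betw_apply)
  have bijg: "bij_betw g S {0..<m}" unfolding g_def using bij by (rule bij_betw_inv_into)
  define J where "J q = (\<lambda>x. if x \<in> S then f (q (g x)) else x)" for q :: "nat \<Rightarrow> nat"
  define I where "I p = (\<lambda>x. if x \<in> {0..<m} then g (p (f x)) else x)" for p :: "'g \<Rightarrow> 'g"
  have J: "J q permutes S \<and> sign (J q) = sign q" if "q permutes {0..<m}" for q
  proof -
    interpret permutes_bij_finite q "{0..<m}" S f g "J q"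
      by unfold_locales (use that bij gf in \<open>auto simp: J_def\<close>)
    show ?thesis using permutes_p' sign_p' by simp
  qed
  have I: "I p permutes {0..<m} \<and> sign (I p) = sign p" if "p permutes S" "finite S" for p
  proof -
    interpret permutes_bij_finite p S "{0..<m}" g f "I p"
      by unfold_locales (use that bijg fg in \<open>auto simp: I_def\<close>)
    show ?thesis using permutes_p' sign_p' by simp
  qed
  have finS: "finite S" using bij bij_betw_finite by blast
  show ?thesis
  proof (rule sum.reindex_bij_witness[where j = J and i = I])
    fix q assume q: "q \<in> {q. q permutes {0..<m}}"
    show "I (J q) = q"
    proof
      fix x show "I (J q) x = q x"
        using q fS gf permutes_in_image[of q "{0..<m}"] permutes_not_in[of q "{0..<m}"]
        unfolding I_def J_def by auto
    qed
    show "J q \<in> {p. p permutes S}" using J q by auto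
    have "(\<Prod>s\<in>S. a s (J q s)) = (\<Prod>i\<in>{0..<m}. a (f i) (J q (f i)))"
      using prod.reindex_bij_betw[OF bij, of "\<lambda>s. a s (J q s)"] by simp
    also have "\<dots> = (\<Prod>i=0..<m. a (f i) (f (q i)))"
      by (rule prod.cong) (use fS gf in \<open>auto simp: J_def\<close>)
    finally show "of_int (sign (J q)) * (\<Prod>s\<in>S. a s (J q s)) =
         of_int (sign q) * (\<Prod>i = 0..<m. a (f i) (f (q i)))" using J q by simp
  next
    fix p assume p: "p \<in> {p. p permutes S}"
    show "J (I p) = p"
    proof
      fix x show "J (I p) x = p x"
        using p gS fg permutes_in_image[of p S] permutes_not_in[of p S]
        unfolding I_def J_def by auto
    qed
    show "I p \<in> {q. q permutes {0..<m}}" using I p finS by auto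
  qed
qed

lemma adj_exists:
  fixes a :: "'g \<Rightarrow> 'g \<Rightarrow> 'k::comm_ring_1"
  assumes finS: "finite S"
  shows "\<exists>B. (\<forall>s\<in>S. \<forall>u\<in>S. (\<Sum>t\<in>S. a s t * B t u) =
        (if s = u then (\<Sum>p\<in>{p. p permutes S}. of_int (sign p) * (\<Prod>s\<in>S. a s (p s))) else 0)) \<and>
      (\<forall>s\<in>S. \<forall>u\<in>S. (\<Sum>t\<in>S. B s t * a t u) =
        (if s = u then (\<Sum>p\<in>{p. p permutes S}. of_int (sign p) * (\<Prod>s\<in>S. a s (p s))) else 0))"
proof -
  define D where "D = (\<Sum>p\<in>{p. p permutes S}. of_int (sign p) * (\<Prod>s\<in>S. a s (p s)))"
  define m where "m = card S"
  obtain f :: "nat \<Rightarrow> 'g" where bij: "bij_betw f {0..<m} S"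
    using ex_bij_betw_nat_finite[OF finS] unfolding m_def by blast
  define g where "g = inv_into {0..<m} f"
  have fg: "f (g x) = x" if "x \<in> S" for x using bij that unfolding g_def
    by (meson bij_betw_inv_into_right)
  have gf: "g (f x) = x" if "x \<in> {0..<m}" for x using bij that unfolding g_def
    by (meson bij_betw_inv_into_left)
  have gS: "g x < m" if "x \<in> S" for x using bij that unfolding g_def
    by (meson atLeastLessThan_iff bij_betw_apply bij_betw_inv_into)
  have fS: "f x \<in> S" if "x \<in> {0..<m}" for x using bij that by (meson bij_betw_apply)
  define M where "M = mat m m (\<lambda>(i,j). a (f i) (f j))"
  have Mc: "M \<in> carrier_mat m m" unfolding M_def by simp
  have detM: "det M = D"
  proof -
    have "det M = (\<Sum>q | q permutes {0..<m}. of_int (sign q) * (\<Prod>i=0..<m. M $$ (i, q i)))"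
      unfolding det_def M_def by simp
    also have "\<dots> = (\<Sum>q | q permutes {0..<m}. of_int (sign q) * (\<Prod>i=0..<m. a (f i) (f (q i))))"
    proof (rule sum.cong[OF refl])
      fix q assume "q \<in> {q. q permutes {0..<m}}"
      then have "q i < m" if "i < m" for i using permutes_in_image[of q "{0..<m}" i] that by auto
      then show "of_int (sign q) * (\<Prod>i=0..<m. M $$ (i, q i)) = of_int (sign q) * (\<Prod>i=0..<m. a (f i) (f (q i)))"
        unfolding M_def by (intro arg_cong2[where f="(*)"] refl prod.cong) auto
    qed
    also have "\<dots> = D" unfolding D_def by (rule leib_reindex[OF bij])
    finally show ?thesis .
  qed
  define Ad where "Ad = adj_mat M"
  have Adc: "Ad \<in> carrier_mat m m" and MA: "M * Ad = det M \<cdot>\<^sub>m 1\<^sub>m m" and AM: "Ad * M = det M \<cdot>\<^sub>m 1\<^sub>m m"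
    using adj_mat[OF Mc] unfolding Ad_def by auto
  define B where "B t u = Ad $$ (g t, g u)" for t u
  have ginj: "g s = g u \<longleftrightarrow> s = u" if "s \<in> S" "u \<in> S" for s u using that fg by metis
  show ?thesis unfolding D_def[symmetric]
  proof (intro exI[of _ B] conjI ballI)
    fix s u assume s: "s \<in> S" and u: "u \<in> S"
    have "(\<Sum>t\<in>S. a s t * B t u) = (\<Sum>j\<in>{0..<m}. a s (f j) * B (f j) u)"
      using sum.reindex_bij_betw[OF bij, of "\<lambda>t. a s t * B t u"] by simp
    also have "\<dots> = (\<Sum>j\<in>{0..<m}. M $$ (g s, j) * Ad $$ (j, g u))"
      by (rule sum.cong) (use s gS fg gf in \<open>auto simp: M_def B_def\<close>)
    also have "\<dots> = (M * Ad) $$ (g s, g u)"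
      using Mc Adc s u gS by (simp add: scalar_prod_def)
    also have "\<dots> = (if s = u then D else 0)"
      unfolding MA using s u gS ginj detM by simp
    finally show "(\<Sum>t\<in>S. a s t * B t u) = (if s = u then D else 0)" .
  next
    fix s u assume s: "s \<in> S" and u: "u \<in> S"
    have "(\<Sum>t\<in>S. B s t * a t u) = (\<Sum>j\<in>{0..<m}. B s (f j) * a (f j) u)"
      using sum.reindex_bij_betw[OF bij, of "\<lambda>t. B s t * a t u"] by simp
    also have "\<dots> = (\<Sum>j\<in>{0..<m}. Ad $$ (g s, j) * M $$ (j, g u))"
      by (rule sum.cong) (use u gS fg gf in \<open>auto simp: M_def B_def\<close>)
    also have "\<dots> = (Ad * M) $$ (g s, g u)"
      using Mc Adc s u gS by (simp add: scalar_prod_def)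
    also have "\<dots> = (if s = u then D else 0)"
      unfolding AM using s u gS ginj detM by simp
    finally show "(\<Sum>t\<in>S. B s t * a t u) = (if s = u then D else 0)" .
  qed
qed

lemma solve_sys:
  fixes a :: "'g \<Rightarrow> 'g \<Rightarrow> 'k::comm_ring_1"
  assumes finS: "finite S"
    and det: "(\<Sum>p\<in>{p. p permutes S}. of_int (sign p) * (\<Prod>s\<in>S. a s (p s))) dvd 1"
  shows "(\<forall>c. (\<forall>s\<in>S. (\<Sum>t\<in>S. a s t * c t) = 0) \<longrightarrow> (\<forall>t\<in>S. c t = 0))
    \<and> (\<forall>c. (\<forall>u\<in>S. (\<Sum>s\<in>S. c s * a s u) = 0) \<longrightarrow> (\<forall>s\<in>S. c s = 0))
    \<and> (\<forall>b. \<exists>c. \<forall>s\<in>S. (\<Sum>t\<in>S. a s t * c t) = b s)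
    \<and> (\<forall>b. \<exists>c. \<forall>u\<in>S. (\<Sum>s\<in>S. c s * a s u) = b u)"
proof -
  define D where "D = (\<Sum>p\<in>{p. p permutes S}. of_int (sign p) * (\<Prod>s\<in>S. a s (p s)))"
  obtain B where B1: "\<And>s u. s \<in> S \<Longrightarrow> u \<in> S \<Longrightarrow> (\<Sum>t\<in>S. a s t * B t u) = (if s = u then D else 0)"
    and B2: "\<And>s u. s \<in> S \<Longrightarrow> u \<in> S \<Longrightarrow> (\<Sum>t\<in>S. B s t * a t u) = (if s = u then D else 0)"
    using adj_exists[OF finS, of a] unfolding D_def by blast
  obtain Di where Di: "D * Di = 1" using det unfolding D_def by (metis dvdE)
  have unit: "x = 0" if "D * x = 0" for x
  proof -
    have "x = (D * Di) * x" using Di by simp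
    then have "x = Di * (D * x)" by (simp add: algebra_simps)
    then show ?thesis using that by simp
  qed
  have cancel: "(\<Sum>t\<in>S. (if u = t then D else 0) * c t) = D * c u" if "u \<in> S" for u and c :: "'g \<Rightarrow> 'k"
    proof -
    have "(\<Sum>t\<in>S. (if u = t then D else 0) * c t) = (\<Sum>t\<in>S. if u = t then D * c t else 0)"
      by (rule sum.cong) auto
    then show ?thesis using that finS by (simp add: sum.delta)
  qed
  have cancel2: "(\<Sum>t\<in>S. c t * (if t = u then D else 0)) = D * c u" if "u \<in> S" for u and c :: "'g \<Rightarrow> 'k"
    proof -
    have "(\<Sum>t\<in>S. c t * (if t = u then D else 0)) = (\<Sum>t\<in>S. if t = u then D * c t else 0)"
      by (rule sum.cong) auto
    then show ?thesis using that finS by (simp add: sum.delta')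
  qed
  have P1: "\<forall>t\<in>S. c t = 0" if h: "\<forall>s\<in>S. (\<Sum>t\<in>S. a s t * c t) = 0" for c
  proof
    fix u assume u: "u \<in> S"
    have "0 = (\<Sum>s\<in>S. B u s * (\<Sum>t\<in>S. a s t * c t))" using h by simp
    also have "\<dots> = (\<Sum>t\<in>S. (\<Sum>s\<in>S. B u s * a s t) * c t)"
      by (simp add: sum_distrib_left sum_distrib_right mult.assoc, rule sum.swap)
    also have "\<dots> = (\<Sum>t\<in>S. (if u = t then D else 0) * c t)"
      by (rule sum.cong) (use B2 u in auto)
    also have "\<dots> = D * c u" using cancel u by blast
    finally show "c u = 0" using unit by metis
  qed
  have P2: "\<forall>s\<in>S. c s = 0" if h: "\<forall>u\<in>S. (\<Sum>s\<in>S. c s * a s u) = 0" for c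
  proof
    fix u assume u: "u \<in> S"
    have "0 = (\<Sum>s\<in>S. (\<Sum>t\<in>S. c t * a t s) * B s u)" using h by simp
    also have "\<dots> = (\<Sum>t\<in>S. c t * (\<Sum>s\<in>S. a t s * B s u))"
      by (simp add: sum_distrib_left sum_distrib_right mult.assoc, rule sum.swap)
    also have "\<dots> = (\<Sum>t\<in>S. c t * (if t = u then D else 0))"
      by (rule sum.cong) (use B1 u in auto)
    also have "\<dots> = D * c u" using cancel2 u by blast
    finally show "c u = 0" using unit by metis
  qed
  have P3: "\<exists>c. \<forall>s\<in>S. (\<Sum>t\<in>S. a s t * c t) = b s" for b
  proof (intro exI[of _ "\<lambda>t. Di * (\<Sum>u\<in>S. B t u * b u)"] ballI)
    fix s assume s: "s \<in> S"
    have "(\<Sum>t\<in>S. a s t * (Di * (\<Sum>u\<in>S. B t u * b u))) = Di * (\<Sum>u\<in>S. (\<Sum>t\<in>S. a s t * B t u) * b u)"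
      by (simp add: sum_distrib_left sum_distrib_right mult.assoc mult.left_commute, rule sum.swap)
    also have "\<dots> = Di * (\<Sum>u\<in>S. (if s = u then D else 0) * b u)"
      by (intro arg_cong2[where f="(*)"] refl sum.cong) (use B1 s in auto)
    also have "\<dots> = Di * (D * b s)" using cancel[OF s, of b] by simp
    also have "\<dots> = b s" using Di by (metis mult.assoc mult.commute mult_1)
    finally show "(\<Sum>t\<in>S. a s t * (Di * (\<Sum>u\<in>S. B t u * b u))) = b s" .
  qed
  have P4: "\<exists>c. \<forall>u\<in>S. (\<Sum>s\<in>S. c s * a s u) = b u" for b
  proof (intro exI[of _ "\<lambda>s. Di * (\<Sum>t\<in>S. b t * B t s)"] ballI)
    fix u assume u: "u \<in> S"
    have "(\<Sum>s\<in>S. (Di * (\<Sum>t\<in>S. b t * B t s)) * a s u) = Di * (\<Sum>t\<in>S. b t * (\<Sum>s\<in>S. B t s * a s u))"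
      by (simp add: sum_distrib_left sum_distrib_right mult.assoc mult.left_commute, rule sum.swap)
    also have "\<dots> = Di * (\<Sum>t\<in>S. b t * (if t = u then D else 0))"
      by (intro arg_cong2[where f="(*)"] refl sum.cong) (use B2 u in auto)
    also have "\<dots> = Di * (D * b u)" using cancel2[OF u, of b] by simp
    also have "\<dots> = b u" using Di by (metis mult.assoc mult.commute mult_1)
    finally show "(\<Sum>s\<in>S. (Di * (\<Sum>t\<in>S. b t * B t s)) * a s u) = b u" .
  qed
  show ?thesis using P1 P2 P3 P4 by blast
qed

lemma pair_sum_left: "pair n (\<lambda>i. \<Sum>s\<in>S. c s * x s i) f = (\<Sum>s\<in>S. c s * pair n (x s) f)"
  unfolding pair_def by (simp add: sum_distrib_left sum_distrib_right mult.assoc, rule sum.swap)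

lemma pair_sum_right: "pair n v (\<lambda>i. \<Sum>s\<in>S. c s * x s i) = (\<Sum>s\<in>S. c s * pair n v (x s))"
  unfolding pair_def by (simp add: sum_distrib_left sum_distrib_right mult.left_commute, rule sum.swap)

lemma pair_add: "pair n (\<lambda>i. v i + w i) f = pair n v f + pair n w f"
  unfolding pair_def by (simp add: distrib_right sum.distrib)

lemma pair_diff: "pair n (\<lambda>i. v i - w i) f = pair n v f - pair n w f"
  unfolding pair_def by (simp add: left_diff_distrib sum_subtractf)

lemma pair_smult: "pair n (\<lambda>i. c * v i) f = c * pair n v f"
  unfolding pair_def by (simp add: sum_distrib_left mult.assoc)

lemma pair_add_r: "pair n v (\<lambda>i. f i + g i) = pair n v f + pair n v g"
  unfolding pair_def by (simp add: distrib_left sum.distrib)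

lemma pair_smult_r: "pair n v (\<lambda>i. c * f i) = c * pair n v f"
  unfolding pair_def by (simp add: sum_distrib_left mult.left_commute)

lemma pair_zero: "pair n (\<lambda>i. 0) f = 0"
  unfolding pair_def by simp

lemma pair_unitv: "j < n \<Longrightarrow> pair n (unitv j) f = f j"
proof -
  assume j: "j < n"
  have "pair n (unitv j) f = (\<Sum>i<n. if i = j then f i else 0)"
    unfolding pair_def unitv_def by (rule sum.cong) auto
  then show ?thesis using j by (simp add: sum.delta')
qed

theorem mainTheorem1:
  fixes G :: "('g, 'b) monoid_scheme" and S :: "'g set" and n :: nat
    and cor rt :: "'g \<Rightarrow> nat \<Rightarrow> 'k::comm_ring_1"
    and \<rho> :: "'g \<Rightarrow> (nat \<Rightarrow> 'k) \<Rightarrow> (nat \<Rightarrow> 'k)"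
  assumes cox: "coxeter_system G S"
    and finS: "finite S"
    and no2tors: "\<forall>x::'k. 2 * x = 0 \<longrightarrow> x = 0"
    and real: "realization G S n cor rt \<rho>"
    and det: "cartan_det S n cor rt dvd 1"
  shows "lin_indep_fam S rt \<and> lin_indep_fam S cor \<and>
    (\<exists>T. submodule_h n T \<and> direct_sum_h n (span_fam S cor) T \<and>
         (\<forall>v\<in>T. \<forall>s\<in>S. pair n v (rt s) = 0) \<and>
         (\<forall>w\<in>carrier G. \<forall>v\<in>T. \<rho> w v = v)) \<and>
    (\<exists>T'. submodule_h n T' \<and> direct_sum_h n (span_fam S rt) T' \<and>
         (\<forall>f\<in>T'. \<forall>s\<in>S. pair n (cor s) f = 0) \<and>
         (\<forall>w\<in>carrier G. \<forall>f\<in>T'. dual_act G n \<rho> w f = f))"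
proof -
  define a where "a s t = pair n (cor s) (rt t)" for s t
  have sol: "(\<forall>c. (\<forall>s\<in>S. (\<Sum>t\<in>S. a s t * c t) = 0) \<longrightarrow> (\<forall>t\<in>S. c t = 0))
    \<and> (\<forall>c. (\<forall>u\<in>S. (\<Sum>s\<in>S. c s * a s u) = 0) \<longrightarrow> (\<forall>s\<in>S. c s = 0))
    \<and> (\<forall>b. \<exists>c. \<forall>s\<in>S. (\<Sum>t\<in>S. a s t * c t) = b s)
    \<and> (\<forall>b. \<exists>c. \<forall>u\<in>S. (\<Sum>s\<in>S. c s * a s u) = b u)"
    by (rule solve_sys[OF finS]) (use det in \<open>simp add: cartan_det_def a_def\<close>)
  then have S1: "\<And>c. (\<forall>s\<in>S. (\<Sum>t\<in>S. a s t * c t) = 0) \<Longrightarrow> (\<forall>t\<in>S. c t = 0)"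
    and S2: "\<And>c. (\<forall>u\<in>S. (\<Sum>s\<in>S. c s * a s u) = 0) \<Longrightarrow> (\<forall>s\<in>S. c s = 0)"
    and S3: "\<And>b. \<exists>c. \<forall>s\<in>S. (\<Sum>t\<in>S. a s t * c t) = b s"
    and S4: "\<And>b. \<exists>c. \<forall>u\<in>S. (\<Sum>s\<in>S. c s * a s u) = b u"
    by blast+
  have grp: "group G" and SG: "S \<subseteq> carrier G"
    and carr: "carrier G = {word_prod G w | w. set w \<subseteq> S}"
    using cox unfolding coxeter_system_def by auto
  have corh: "\<And>s. s \<in> S \<Longrightarrow> in_h n (cor s)" and rth: "\<And>s. s \<in> S \<Longrightarrow> in_h n (rt s)"
    and rep: "is_rep G n \<rho>"
    and rs: "\<And>s v. s \<in> S \<Longrightarrow> in_h n v \<Longrightarrow> \<rho> s v = refl_h n (cor s) (rt s) v"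
    using real unfolding realization_def by auto
  have rin: "\<And>g v. g \<in> carrier G \<Longrightarrow> in_h n v \<Longrightarrow> in_h n (\<rho> g v)"
    and rone: "\<And>v. in_h n v \<Longrightarrow> \<rho> \<one>\<^bsub>G\<^esub> v = v"
    and rmul: "\<And>g h v. g \<in> carrier G \<Longrightarrow> h \<in> carrier G \<Longrightarrow> in_h n v \<Longrightarrow> \<rho> (g \<otimes>\<^bsub>G\<^esub> h) v = \<rho> g (\<rho> h v)"
    using rep unfolding is_rep_def by auto
  have wp_carr: "word_prod G w \<in> carrier G" if "set w \<subseteq> S" for w
    using that carr by blast
  have wp_cons: "word_prod G (s # w) = s \<otimes>\<^bsub>G\<^esub> word_prod G w" for s w
    unfolding word_prod_def by simp
  have wp_nil: "word_prod G [] = \<one>\<^bsub>G\<^esub>" unfolding word_prod_def by simp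
  have carr_word: "\<exists>w. set w \<subseteq> S \<and> g = word_prod G w" if "g \<in> carrier G" for g
    using that carr by blast
  have sumh: "in_h n (\<lambda>i. \<Sum>s\<in>S. c s * x s i)" if "\<And>s. s \<in> S \<Longrightarrow> in_h n (x s)" for c x
    using that unfolding in_h_def by simp
  have li_rt: "lin_indep_fam S rt"
    unfolding lin_indep_fam_def
  proof (intro allI impI)
    fix c assume h: "(\<lambda>i. \<Sum>s\<in>S. c s * rt s i) = (\<lambda>i. 0)"
    show "\<forall>s\<in>S. c s = 0"
    proof (rule S1, intro ballI)
      fix s assume "s \<in> S"
      have "(\<Sum>t\<in>S. a s t * c t) = pair n (cor s) (\<lambda>i. \<Sum>t\<in>S. c t * rt t i)"
        by (simp add: pair_sum_right a_def mult.commute)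
      also have "\<dots> = 0" unfolding h pair_def by simp
      finally show "(\<Sum>t\<in>S. a s t * c t) = 0" .
    qed
  qed
  have li_cor: "lin_indep_fam S cor"
    unfolding lin_indep_fam_def
  proof (intro allI impI)
    fix c assume h: "(\<lambda>i. \<Sum>s\<in>S. c s * cor s i) = (\<lambda>i. 0)"
    show "\<forall>s\<in>S. c s = 0"
    proof (rule S2, intro ballI)
      fix u assume "u \<in> S"
      have "(\<Sum>s\<in>S. c s * a s u) = pair n (\<lambda>i. \<Sum>s\<in>S. c s * cor s i) (rt u)"
        by (simp add: pair_sum_left a_def)
      also have "\<dots> = 0" unfolding h pair_zero by simp
      finally show "(\<Sum>s\<in>S. c s * a s u) = 0" .
    qed
  qed
  define T where "T = {v. in_h n v \<and> (\<forall>s\<in>S. pair n v (rt s) = 0)}"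
  have subT: "submodule_h n T"
    unfolding submodule_h_def T_def
    by (auto simp: in_h_def pair_add pair_smult pair_zero)
  have dsT: "direct_sum_h n (span_fam S cor) T"
    unfolding direct_sum_h_def
  proof (intro conjI allI impI)
    show "span_fam S cor \<inter> T = {\<lambda>i. 0}"
    proof
      show "span_fam S cor \<inter> T \<subseteq> {\<lambda>i. 0}"
      proof
        fix x assume "x \<in> span_fam S cor \<inter> T"
        then obtain c where x: "x = (\<lambda>i. \<Sum>s\<in>S. c s * cor s i)" and xT: "x \<in> T"
          unfolding span_fam_def by auto
        have "\<forall>s\<in>S. c s = 0"
        proof (rule S2, intro ballI)
          fix u assume u: "u \<in> S"
          have "(\<Sum>s\<in>S. c s * a s u) = pair n x (rt u)"
            by (simp add: x pair_sum_left a_def)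
          also have "\<dots> = 0" using xT u unfolding T_def by auto
          finally show "(\<Sum>s\<in>S. c s * a s u) = 0" .
        qed
        then show "x \<in> {\<lambda>i. 0}" unfolding x by simp
      qed
      show "{\<lambda>i. 0} \<subseteq> span_fam S cor \<inter> T"
        unfolding span_fam_def T_def
        by (auto simp: in_h_def pair_zero intro!: exI[of _ "\<lambda>s. 0"])
    qed
  next
    fix v :: "nat \<Rightarrow> 'k" assume v: "in_h n v"
    obtain c where c: "\<forall>u\<in>S. (\<Sum>s\<in>S. c s * a s u) = pair n v (rt u)"
      using S4[of "\<lambda>u. pair n v (rt u)"] by blast
    define x where "x = (\<lambda>i. \<Sum>s\<in>S. c s * cor s i)"
    have xs: "x \<in> span_fam S cor" unfolding x_def span_fam_def by auto
    have xh: "in_h n x" unfolding x_def by (rule sumh) (rule corh)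
    have tT: "(\<lambda>i. v i - x i) \<in> T"
      unfolding T_def
    proof (intro CollectI conjI ballI)
      show "in_h n (\<lambda>i. v i - x i)" using v xh unfolding in_h_def by simp
      fix u assume u: "u \<in> S"
      have "pair n x (rt u) = (\<Sum>s\<in>S. c s * a s u)" by (simp add: x_def pair_sum_left a_def)
      then show "pair n (\<lambda>i. v i - x i) (rt u) = 0" using c u by (simp add: pair_diff)
    qed
    show "\<exists>x\<in>span_fam S cor. \<exists>t\<in>T. v = (\<lambda>i. x i + t i)"
      using xs tT by (intro bexI[of _ x] bexI[of _ "\<lambda>i. v i - x i"]) auto
  qed
  have kerT: "\<forall>v\<in>T. \<forall>s\<in>S. pair n v (rt s) = 0" unfolding T_def by auto
  have fixT: "\<rho> (word_prod G w) v = v" if "set w \<subseteq> S" "v \<in> T" for w v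
    using that
  proof (induction w)
    case Nil
    then show ?case using rone unfolding T_def wp_nil by auto
  next
    case (Cons s w)
    then have s: "s \<in> S" and w: "set w \<subseteq> S" by auto
    have vh: "in_h n v" using Cons.prems unfolding T_def by auto
    have "\<rho> (word_prod G (s # w)) v = \<rho> s (\<rho> (word_prod G w) v)"
      unfolding wp_cons using rmul[OF _ wp_carr[OF w] vh] s SG by auto
    also have "\<dots> = \<rho> s v" using Cons.IH[OF w Cons.prems(2)] by simp
    also have "\<dots> = v" using rs[OF s vh] Cons.prems(2) s unfolding T_def refl_h_def by auto
    finally show ?case .
  qed
  have part1: "\<exists>T. submodule_h n T \<and> direct_sum_h n (span_fam S cor) T \<and>
         (\<forall>v\<in>T. \<forall>s\<in>S. pair n v (rt s) = 0) \<and>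
         (\<forall>w\<in>carrier G. \<forall>v\<in>T. \<rho> w v = v)"
    using subT dsT kerT fixT carr_word by blast
  define T' where "T' = {f. in_h n f \<and> (\<forall>s\<in>S. pair n (cor s) f = 0)}"
  have subT': "submodule_h n T'"
    unfolding submodule_h_def T'_def
    by (auto simp: in_h_def pair_add_r pair_smult_r) (simp add: pair_def)
  have dsT': "direct_sum_h n (span_fam S rt) T'"
    unfolding direct_sum_h_def
  proof (intro conjI allI impI)
    show "span_fam S rt \<inter> T' = {\<lambda>i. 0}"
    proof
      show "span_fam S rt \<inter> T' \<subseteq> {\<lambda>i. 0}"
      proof
        fix x assume "x \<in> span_fam S rt \<inter> T'"
        then obtain c where x: "x = (\<lambda>i. \<Sum>s\<in>S. c s * rt s i)" and xT: "x \<in> T'"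
          unfolding span_fam_def by auto
        have "\<forall>s\<in>S. c s = 0"
        proof (rule S1, intro ballI)
          fix s assume s: "s \<in> S"
          have "(\<Sum>t\<in>S. a s t * c t) = pair n (cor s) x"
            by (simp add: x pair_sum_right a_def mult.commute)
          also have "\<dots> = 0" using xT s unfolding T'_def by auto
          finally show "(\<Sum>t\<in>S. a s t * c t) = 0" .
        qed
        then show "x \<in> {\<lambda>i. 0}" unfolding x by simp
      qed
      show "{\<lambda>i. 0} \<subseteq> span_fam S rt \<inter> T'"
        unfolding span_fam_def T'_def
        by (auto simp: in_h_def pair_def intro!: exI[of _ "\<lambda>s. 0"])
    qed
  next
    fix v :: "nat \<Rightarrow> 'k" assume v: "in_h n v"
    obtain c where c: "\<forall>s\<in>S. (\<Sum>t\<in>S. a s t * c t) = pair n (cor s) v"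
      using S3[of "\<lambda>s. pair n (cor s) v"] by blast
    define x where "x = (\<lambda>i. \<Sum>s\<in>S. c s * rt s i)"
    have xs: "x \<in> span_fam S rt" unfolding x_def span_fam_def by auto
    have xh: "in_h n x" unfolding x_def by (rule sumh) (rule rth)
    have tT: "(\<lambda>i. v i - x i) \<in> T'"
      unfolding T'_def
    proof (intro CollectI conjI ballI)
      show "in_h n (\<lambda>i. v i - x i)" using v xh unfolding in_h_def by simp
      fix s assume s: "s \<in> S"
      have "pair n (cor s) x = (\<Sum>t\<in>S. a s t * c t)" by (simp add: x_def pair_sum_right a_def mult.commute)
      moreover have "pair n (cor s) (\<lambda>i. v i - x i) = pair n (cor s) v - pair n (cor s) x"
        unfolding pair_def by (simp add: right_diff_distrib sum_subtractf)
      ultimately show "pair n (cor s) (\<lambda>i. v i - x i) = 0" using c s by simp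
    qed
    show "\<exists>x\<in>span_fam S rt. \<exists>t\<in>T'. v = (\<lambda>i. x i + t i)"
      using xs tT by (intro bexI[of _ x] bexI[of _ "\<lambda>i. v i - x i"]) auto
  qed
  have kerT': "\<forall>f\<in>T'. \<forall>s\<in>S. pair n (cor s) f = 0" unfolding T'_def by auto
  have pairT': "pair n (\<rho> (word_prod G w) u) f = pair n u f" if "set w \<subseteq> S" "f \<in> T'" "in_h n u" for w f u
    using that
  proof (induction w arbitrary: u)
    case Nil
    then show ?case using rone unfolding wp_nil by auto
  next
    case (Cons s w)
    then have s: "s \<in> S" and w: "set w \<subseteq> S" by auto
    have u'h: "in_h n (\<rho> (word_prod G w) u)" using rin[OF wp_carr[OF w] Cons.prems(3)] .
    have "pair n (\<rho> (word_prod G (s # w)) u) f = pair n (\<rho> s (\<rho> (word_prod G w) u)) f"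
      unfolding wp_cons using rmul[OF _ wp_carr[OF w] Cons.prems(3)] s SG by auto
    also have "\<dots> = pair n (\<rho> (word_prod G w) u) f"
      using Cons.prems(2) s unfolding rs[OF s u'h] refl_h_def T'_def
      by (simp add: pair_diff mult.commute[of "cor s _"] pair_smult)
    also have "\<dots> = pair n u f" using Cons.IH[OF w Cons.prems(2,3)] .
    finally show ?case .
  qed
  have fixT': "dual_act G n \<rho> g f = f" if g: "g \<in> carrier G" and f: "f \<in> T'" for g f
  proof
    fix j
    have ig: "inv\<^bsub>G\<^esub> g \<in> carrier G" using grp g by (simp add: group.inv_closed)
    then obtain w where w: "set w \<subseteq> S" "inv\<^bsub>G\<^esub> g = word_prod G w" using carr_word by blast
    show "dual_act G n \<rho> g f j = f j"
    proof (cases "j < n")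
      case True
      have uh: "in_h n (unitv j)" using True unfolding in_h_def unitv_def by auto
      show ?thesis using True pairT'[OF w(1) f uh] pair_unitv[OF True] unfolding dual_act_def w(2) by simp
    next
      case False
      then show ?thesis using f unfolding dual_act_def T'_def in_h_def by auto
    qed
  qed
  show ?thesis using li_rt li_cor part1 subT' dsT' kerT' fixT' by blast
qed

end
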